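(* Let $C\subseteq\mathbb{F}_2^n$ be a code, $x\in C$ and $y\in\mathbb{F}_2^n$. Then $D_C(y)=x$ provided that one of the following holds: (1) $\delta(y,x)<\frac{\delta(C)+(\omega^{\mathrm{H}}(y)-\omega^{\mathrm{H}}(x))(\gamma-1)}{2}$, or (2) $\delta(y,x)<\frac{\hat\delta(C)+\omega^{\mathrm{H}}(y)(\gamma-1)}{2}$.
   Context: Let $n\ge2$ and fix reals $0<p\le q<1/2$. Let $\mathbb{P}^n(y\mid x)=\prod_{i=1}^n\mathbb{P}(y_i\mid x_i)$ where $\mathbb{P}(1\mid0)=p$, $\mathbb{P}(0\mid0)=1-p$, $\mathbb{P}(0\mid1)=q$, $\mathbb{P}(1\mid1)=1-q$. Let $\gamma:=\log_{q/(1-p)}\left(\frac{p}{1-q}\right)$. For $x\in\mathbb{F}_2^n$, $\omega^{\mathrm{H}}(x)=|\{i:x_i=1\}|$; for $a,b\in\{0,1\}$, $d_{ab}(y,x)=|\{i: y_i=a,\ x_i=b\}|$. Discrepancy: $\delta(y,x):=\gamma\,d_{10}(y,x)+d_{01}(y,x)$; symmetric discrepancy: $\hat\delta(y,x):=\delta(y,x)-\omega^{\mathrm{H}}(y)(\gamma-1)$. A code is a subset $C\subseteq\mathbb{F}_2^n$ with $|C|\ge2$; its minimum discrepancy is $\delta(C)=\min\{\delta(x,x'):x,x'\in C,\ x\ne x'\}$ and its minimum symmetric discrepancy is $\hat\delta(C)=\min\{\hat\delta(x,x'):x,x'\in C,\ x\ne x'\}$. The maximum likelihood decoder $D_C:\mathbb{F}_2^n\to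 C\cup\{\mathbf f\}$ sends $y$ to $x$ if $x$ is the unique codeword maximizing $\mathbb{P}^n(y\mid x)$, and to a failure symbol $\mathbf f\notin\mathbb{F}_2^n$ otherwise. *)

theory Defs
  imports Complex_Main
begin

text \<open>Binary words of length n: functions nat => bool that are False outside {0..<n}
  (True = 1, False = 0).\<close>
definition words :: "nat \<Rightarrow> (nat \<Rightarrow> bool) set" where
  "words n = {x. \<forall>i\<ge>n. \<not> x i}"

definition hw :: "nat \<Rightarrow> (nat \<Rightarrow> bool) \<Rightarrow> nat" where
  "hw n x = card {i. i < n \<and> x i}"

definition dab :: "nat \<Rightarrow> bool \<Rightarrow> bool \<Rightarrow> (nat \<Rightarrow> bool) \<Rightarrow> (nat \<Rightarrow> bool) \<Rightarrow> nat" where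
  "dab n a b y x = card {i. i < n \<and> y i = a \<and> x i = b}"

definition gam :: "real \<Rightarrow> real \<Rightarrow> real" where
  "gam p q = log (q / (1 - p)) (p / (1 - q))"

definition discr :: "real \<Rightarrow> real \<Rightarrow> nat \<Rightarrow> (nat \<Rightarrow> bool) \<Rightarrow> (nat \<Rightarrow> bool) \<Rightarrow> real" where
  "discr p q n y x = gam p q * real (dab n True False y x) + real (dab n False True y x)"

definition sdiscr :: "real \<Rightarrow> real \<Rightarrow> nat \<Rightarrow> (nat \<Rightarrow> bool) \<Rightarrow> (nat \<Rightarrow> bool) \<Rightarrow> real" where
  "sdiscr p q n y x = discr p q n y x - real (hw n y) * (gam p q - 1)"

definition is_code :: "nat \<Rightarrow> (nat \<Rightarrow> bool) set \<Rightarrow> bool" where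
  "is_code n C \<longleftrightarrow> C \<subseteq> words n \<and> card C \<ge> 2"

definition min_discr :: "real \<Rightarrow> real \<Rightarrow> nat \<Rightarrow> (nat \<Rightarrow> bool) set \<Rightarrow> real" where
  "min_discr p q n C = Min {discr p q n x x' | x x'. x \<in> C \<and> x' \<in> C \<and> x \<noteq> x'}"

definition min_sdiscr :: "real \<Rightarrow> real \<Rightarrow> nat \<Rightarrow> (nat \<Rightarrow> bool) set \<Rightarrow> real" where
  "min_sdiscr p q n C = Min {sdiscr p q n x x' | x x'. x \<in> C \<and> x' \<in> C \<and> x \<noteq> x'}"

definition chan1 :: "real \<Rightarrow> real \<Rightarrow> bool \<Rightarrow> bool \<Rightarrow> real" where
  "chan1 p q yb xb = (if xb then (if yb then 1 - q else q) else (if yb then p else 1 - p))"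

definition chan :: "real \<Rightarrow> real \<Rightarrow> nat \<Rightarrow> (nat \<Rightarrow> bool) \<Rightarrow> (nat \<Rightarrow> bool) \<Rightarrow> real" where
  "chan p q n y x = (\<Prod>i<n. chan1 p q (y i) (x i))"

text \<open>ML decoder; None plays the role of the failure symbol f.\<close>
definition ml_decode :: "real \<Rightarrow> real \<Rightarrow> nat \<Rightarrow> (nat \<Rightarrow> bool) set \<Rightarrow> (nat \<Rightarrow> bool) \<Rightarrow> (nat \<Rightarrow> bool) option" where
  "ml_decode p q n C y =
     (if \<exists>!x. x \<in> C \<and> (\<forall>x'\<in>C. chan p q n y x' \<le> chan p q n y x)
      then Some (THE x. x \<in> C \<and> (\<forall>x'\<in>C. chan p q n y x' \<le> chan p q n y x))
      else None)"

end

theory Submission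
  imports Defs
begin

definition cst :: "real \<Rightarrow> bool \<Rightarrow> bool \<Rightarrow> real" where
  "cst g a b = (if a \<and> \<not> b then g else if \<not> a \<and> b then 1 else 0)"

lemma card_real_sum:
  "real (card {i. i < (n::nat) \<and> P i}) = (\<Sum>i<n. if P i then 1 else 0)"
proof (induction n)
  case 0
  then show ?case by simp
next
  case (Suc n)
  have e: "{i. i < Suc n \<and> P i} = (if P n then insert n {i. i < n \<and> P i} else {i. i < n \<and> P i})"
    by (auto simp: less_Suc_eq)
  show ?case using Suc by (simp add: e)
qed

lemma discr_sum: "discr p q n y x = (\<Sum>i<n. cst (gam p q) (y i) (x i))"
proof -
  have "discr p q n y x = (\<Sum>i<n. gam p q * (if y i \<and> \<not> x i then 1 else 0) + (if \<not> y i \<and> x i then 1 else 0))"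
    unfolding discr_def dab_def card_real_sum sum_distrib_left sum.distrib by simp
  also have "\<dots> = (\<Sum>i<n. cst (gam p q) (y i) (x i))"
    by (rule sum.cong) (auto simp: cst_def)
  finally show ?thesis .
qed

lemma hw_sum: "real (hw n y) = (\<Sum>i<n. if y i then 1 else 0)"
  unfolding hw_def card_real_sum by simp

lemma sdiscr_sum: "sdiscr p q n y x = (\<Sum>i<n. cst (gam p q) (y i) (x i) - (if y i then gam p q - 1 else 0))"
proof -
  have "(\<Sum>i<n. cst (gam p q) (y i) (x i) - (if y i then gam p q - 1 else 0))
     = (\<Sum>i<n. cst (gam p q) (y i) (x i)) - (\<Sum>i<n. (if y i then 1 else 0) * (gam p q - 1))"
    unfolding sum_subtractf[symmetric] by (rule sum.cong) auto
  then show ?thesis unfolding sdiscr_def discr_sum hw_sum sum_distrib_right by simp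
qed

lemma tri1g:
  assumes "gam p q \<ge> 0"
  shows "discr p q n x x' \<le> discr p q n x y + discr p q n y x'"
  unfolding discr_sum sum.distrib[symmetric]
  by (rule sum_mono) (use assms in \<open>auto simp: cst_def\<close>)

lemma tri2:
  assumes "gam p q \<ge> 0"
  shows "sdiscr p q n x x' \<le> sdiscr p q n x y + sdiscr p q n y x' + real (hw n y) * (gam p q - 1)"
  unfolding sdiscr_sum hw_sum sum_distrib_right sum.distrib[symmetric]
  by (rule sum_mono) (use assms in \<open>auto simp: cst_def\<close>)

lemma swap: "discr p q n x y = discr p q n y x - (real (hw n y) - real (hw n x)) * (gam p q - 1)"
proof -
  have "discr p q n x y = (\<Sum>i<n. cst (gam p q) (y i) (x i) - ((if y i then 1 else 0) - (if x i then 1 else 0)) * (gam p q - 1))"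
    unfolding discr_sum by (rule sum.cong) (auto simp: cst_def)
  also have "\<dots> = (\<Sum>i<n. cst (gam p q) (y i) (x i)) - ((\<Sum>i<n. if y i then 1 else 0) - (\<Sum>i<n. if x i then 1 else 0)) * (gam p q - 1)"
    by (simp add: sum_distrib_right sum_subtractf left_diff_distrib)
  finally show ?thesis unfolding discr_sum hw_sum .
qed

lemma sswap: "sdiscr p q n x y = sdiscr p q n y x"
  unfolding sdiscr_def using swap[of p q n x y] by (simp add: algebra_simps)

lemma chan_eq:
  assumes "0 < p" "p \<le> q" "q < 1/2"
  shows "chan p q n y x = (\<Prod>i<n. if y i then 1 - q else 1 - p) * (q/(1-p)) powr discr p q n y x"
proof -
  let ?b = "q/(1-p)"
  have b0: "0 < ?b" "?b \<noteq> 1" using assms by auto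
  have pw: "?b powr gam p q = p/(1-q)" unfolding gam_def
    by (rule powr_log_cancel) (use assms in auto)
  have c1: "chan1 p q a c = (if a then 1 - q else 1 - p) * ?b powr cst (gam p q) a c" for a c
    using assms pw by (auto simp: chan1_def cst_def)
  show ?thesis
    unfolding chan_def discr_sum powr_sum[OF b0(1)[THEN less_imp_neq, symmetric]] prod.distrib[symmetric] c1 ..
qed

lemma gam_pos:
  assumes "0 < p" "p \<le> q" "q < 1/2"
  shows "gam p q > 0"
proof -
  have "ln (p/(1-q)) < 0" "ln (q/(1-p)) < 0" using assms by auto
  then show ?thesis unfolding gam_def log_def by (simp add: divide_neg_neg)
qed

theorem mainTheorem7:
  fixes p q :: real and n :: nat and C :: "(nat \<Rightarrow> bool) set" and x y :: "nat \<Rightarrow> bool"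
  assumes "n \<ge> 2" and "0 < p" and "p \<le> q" and "q < 1/2"
    and "is_code n C" and "x \<in> C" and "y \<in> words n"
    and "discr p q n y x < (min_discr p q n C + (real (hw n y) - real (hw n x)) * (gam p q - 1)) / 2
         \<or> discr p q n y x < (min_sdiscr p q n C + real (hw n y) * (gam p q - 1)) / 2"
  shows "ml_decode p q n C y = Some x"
proof -
  have fin: "finite C" using assms(5) unfolding is_code_def
    by (metis card.infinite not_numeral_le_zero)
  have g0: "gam p q \<ge> 0" using gam_pos[OF assms(2-4)] by simp
  have better: "discr p q n y x < discr p q n y x'" if x': "x' \<in> C" "x' \<noteq> x" for x'
  proof -
    have f1: "finite {discr p q n x x' | x x'. x \<in> C \<and> x' \<in> C \<and> x \<noteq> x'}"
      by (rule finite_subset[of _ "(\<lambda>(a,b). discr p q n a b) ` (C \<times> C)"]) (use fin in auto)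
    have f2: "finite {sdiscr p q n x x' | x x'. x \<in> C \<and> x' \<in> C \<and> x \<noteq> x'}"
      by (rule finite_subset[of _ "(\<lambda>(a,b). sdiscr p q n a b) ` (C \<times> C)"]) (use fin in auto)
    have m1: "min_discr p q n C \<le> discr p q n x x'"
      unfolding min_discr_def using f1 x' assms(6) by (intro Min_le) auto
    have m2: "min_sdiscr p q n C \<le> sdiscr p q n x x'"
      unfolding min_sdiscr_def using f2 x' assms(6) by (intro Min_le) auto
    have t1: "discr p q n x x' \<le> discr p q n x y + discr p q n y x'" by (rule tri1g[OF g0])
    have t2: "sdiscr p q n x x' \<le> sdiscr p q n x y + sdiscr p q n y x' + real (hw n y) * (gam p q - 1)"
      by (rule tri2[OF g0])
    show ?thesis
      using assms(8)
    proof
      assume h: "discr p q n y x < (min_discr p q n C + (real (hw n y) - real (hw n x)) * (gam p q - 1)) / 2"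
      have ar: "u1 < u5" if "u1 < (u2 + u6) / 2" "u2 \<le> u3" "u3 \<le> u4 + u5" "u4 = u1 - u6" for u1 u2 u3 u4 u5 u6 :: real
        using that by (simp add: field_simps)
      show ?thesis by (rule ar[OF h m1 t1 swap[of p q n x y]])
    next
      assume h: "discr p q n y x < (min_sdiscr p q n C + real (hw n y) * (gam p q - 1)) / 2"
      have ar2: "u1 < u5" if "u1 < (u2 + u6) / 2" "u2 \<le> u3" "u3 \<le> u4 + (u5 - u6) + u6" "u4 = u1 - u6" for u1 u2 u3 u4 u5 u6 :: real
        using that by (simp add: field_simps)
      show ?thesis using h m2 t2 sswap[of p q n x y] unfolding sdiscr_def by (rule ar2)
    qed
  qed
  define K where "K = (\<Prod>i<n. if y i then 1 - q else 1 - (p::real))"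
  have K0: "K > 0" unfolding K_def using assms(2-4) by (intro prod_pos) auto
  have b: "0 < q/(1-p)" "q/(1-p) < 1" using assms(2-4) by auto
  have lt: "chan p q n y x' < chan p q n y x" if "x' \<in> C" "x' \<noteq> x" for x'
    unfolding chan_eq[OF assms(2-4)] K_def[symmetric]
    using K0 powr_less_mono'[OF b better[OF that]] by simp
  have P: "x \<in> C \<and> (\<forall>x'\<in>C. chan p q n y x' \<le> chan p q n y x)"
    using assms(6) lt by (metis less_eq_real_def order_refl)
  have U: "z = x" if "z \<in> C \<and> (\<forall>x'\<in>C. chan p q n y x' \<le> chan p q n y z)" for z
    using that lt assms(6) by (metis not_less)
  have ex: "\<exists>!z. z \<in> C \<and> (\<forall>x'\<in>C. chan p q n y x' \<le> chan p q n y z)"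
    using P U by blast
  have th: "(THE z. z \<in> C \<and> (\<forall>x'\<in>C. chan p q n y x' \<le> chan p q n y z)) = x"
    using P U by (rule the_equality)
  show ?thesis unfolding ml_decode_def using ex th by simp
qed

end
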